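(* Let $f$ be an element of the commutator subgroup of $F(\mathcal{R}[t,t^{-1}])$, expanded as $f=\sum_{i\ge0}(t-1)^iA_i$ with $A_i\in M_2(\mathcal{R})$. Then for every $i\ge1$, all entries of $A_i$ lie in $\Sigma$.
   Context: $\mathcal{R}=\mathbb{Z}[x,x^{-1},y,y^{-1}]$; $\Sigma$ is the augmentation ideal of $\mathcal{R}$ (kernel of $x,y\mapsto1$ to $\mathbb{Z}$). $F(\mathcal{R}[t,t^{-1}])$ is the subgroup of $GL_2(\mathcal{R}[t,t^{-1}])$ generated by $M_1=\begin{pmatrix}1&1-y\\0&x\end{pmatrix}$ and $M_2T=\begin{pmatrix}yt&0\\1-xt&1\end{pmatrix}$. Via $t=1+s$, $t^{-1}=\sum_{i\ge0}(-s)^i$, $\mathcal{R}[t,t^{-1}]$ embeds in the power series ring $\mathcal{R}[[s]]$, so each matrix over $\mathcal{R}[t,t^{-1}]$ has a unique expansion $\sum_{i\ge0}(t-1)^iA_i$ with $A_i$ matrices over $\mathcal{R}$ ($A_0$ is the matrix obtained by setting $t=1$). *)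

theory Defs
  imports "HOL-Analysis.Finite_Cartesian_Product" "HOL-Algebra.Solvable_Groups"
    "HOL-Library.Poly_Mapping" "HOL-Library.Product_Plus"
    "HOL-Computational_Algebra.Formal_Power_Series"
begin

text \<open>The Laurent polynomial ring R = Z[x,x^-1,y,y^-1], realised as the integral
  group ring of Z^2: finitely supported functions (int \<times> int) \<Rightarrow> int with
  convolution product.\<close>
type_synonym LR = "(int \<times> int) \<Rightarrow>\<^sub>0 int"

definition LX :: LR where "LX = Poly_Mapping.single (1, 0) 1"
definition LY :: LR where "LY = Poly_Mapping.single (0, 1) 1"

text \<open>Augmentation map (the ring map x, y \<mapsto> 1 into Z) and its kernel Sigma.\<close>
definition aug :: "LR \<Rightarrow> int" where
  "aug p = (\<Sum>k\<in>Poly_Mapping.keys p. Poly_Mapping.lookup p k)"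

definition Sigma_ideal :: "LR set" where
  "Sigma_ideal = {p. aug p = 0}"

text \<open>R[t,t^-1] embedded in R[[s]] via t = 1 + s, t^-1 = sum (-s)^i.\<close>
definition tt :: "LR fps" where "tt = 1 + fps_X"
definition ttinv :: "LR fps" where "ttinv = Abs_fps (\<lambda>i. (-1) ^ i)"

definition mat2 :: "'a \<Rightarrow> 'a \<Rightarrow> 'a \<Rightarrow> 'a \<Rightarrow> 'a ^ 2 ^ 2" where
  "mat2 a b c d = (\<chi> i j. if i = 1 then (if j = 1 then a else b)
                           else (if j = 1 then c else d))"

definition GL2 :: "(LR fps ^ 2 ^ 2) monoid" where
  "GL2 = \<lparr> carrier = {A. invertible A}, monoid.mult = (\<lambda>A B. A ** B), monoid.one = mat 1 \<rparr>"

definition M1 :: "LR fps ^ 2 ^ 2" where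
  "M1 = mat2 1 (fps_const (1 - LY)) 0 (fps_const LX)"

definition M2T :: "LR fps ^ 2 ^ 2" where
  "M2T = mat2 (fps_const LY * tt) 0 (1 - fps_const LX * tt) 1"

definition Fgrp :: "(LR fps ^ 2 ^ 2) set" where
  "Fgrp = generate GL2 {M1, M2T}"

text \<open>Coefficient matrices A_i of f = sum_i (t-1)^i A_i = sum_i s^i A_i.\<close>
definition coeff_mat :: "LR fps ^ 2 ^ 2 \<Rightarrow> nat \<Rightarrow> LR ^ 2 ^ 2" where
  "coeff_mat f i = (\<chi> j k. fps_nth (f $ j $ k) i)"

end

theory Submission
  imports Defs "HOL-Analysis.Cartesian_Space"
begin

lemma aug_Sum_any: "aug p = Sum_any (Poly_Mapping.lookup p)"
  unfolding aug_def Sum_any.expand_set by (simp add: keys.rep_eq)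

lemma fin_lookup: "finite {k. Poly_Mapping.lookup p k \<noteq> 0}"
  using finite_keys[of p] by (simp add: keys.rep_eq)

lemma aug_add: "aug (p + q) = aug p + aug q"
  unfolding aug_Sum_any Poly_Mapping.lookup_add
  by (rule Sum_any.distrib[OF fin_lookup fin_lookup])

lemma aug_zero[simp]: "aug 0 = 0"
  by (simp add: aug_def)

lemma aug_single[simp]: "aug (Poly_Mapping.single k v) = v"
  by (simp add: aug_def)

lemma aug_one[simp]: "aug 1 = 1"
  by (metis aug_single single_one)

lemma aug_uminus: "aug (- p) = - aug p"
  using aug_add[of p "-p"] by simp

lemma aug_diff: "aug (p - q) = aug p - aug q"
  using aug_add[of p "-q"] aug_uminus[of q] by simp

lemma eq_add_iff: "((k::'a::ab_group_add) = a + q) = (q = k - a)"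
  by (metis add_diff_cancel_left' diff_add_cancel add.commute)

lemma lookup_single_mult: "Poly_Mapping.lookup (Poly_Mapping.single (a::int\<times>int) (b::int) * q) k = b * Poly_Mapping.lookup q (k - a)"
proof -
  have "Poly_Mapping.lookup (Poly_Mapping.single a b * q) k = (\<Sum>l. (b when a = l) * (\<Sum>q'. Poly_Mapping.lookup q q' when k = l + q'))"
    by (simp add: Poly_Mapping.lookup_mult Poly_Mapping.lookup_single)
  also have "\<dots> = (\<Sum>l. (b * (\<Sum>q'. Poly_Mapping.lookup q q' when k = l + q')) when a = l)"
    by (simp add: when_mult)
  also have "\<dots> = b * (\<Sum>q'. Poly_Mapping.lookup q q' when k = a + q')" by simp
  also have "(\<Sum>q'. Poly_Mapping.lookup q q' when k = a + q') = (\<Sum>q'. Poly_Mapping.lookup q q' when q' = k - a)"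
    by (rule Sum_any.cong) (simp add: when_def eq_add_iff)
  finally show ?thesis by simp
qed

lemma aug_single_mult: "aug (Poly_Mapping.single (a::int\<times>int) (b::int) * q) = b * aug q"
proof -
  have "aug (Poly_Mapping.single a b * q) = (\<Sum>k. b * Poly_Mapping.lookup q (k - a))"
    unfolding aug_Sum_any lookup_single_mult by simp
  also have "\<dots> = b * (\<Sum>k. Poly_Mapping.lookup q (k - a))"
  proof (rule Sum_any_right_distrib[symmetric])
    have "{k. Poly_Mapping.lookup q (k - a) \<noteq> 0} \<subseteq> (\<lambda>k. k + a) ` {k. Poly_Mapping.lookup q k \<noteq> 0}"
    proof
      fix x assume "x \<in> {k. Poly_Mapping.lookup q (k - a) \<noteq> 0}"
      then show "x \<in> (\<lambda>k. k + a) ` {k. Poly_Mapping.lookup q k \<noteq> 0}"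
        by (intro image_eqI[of _ _ "x - a"]) simp_all
    qed
    then show "finite {k. Poly_Mapping.lookup q (k - a) \<noteq> 0}"
      using finite_subset fin_lookup by blast
  qed
  also have "(\<Sum>k. Poly_Mapping.lookup q (k - a)) = (\<Sum>k. Poly_Mapping.lookup q k)"
  proof (rule Sum_any.reindex_cong[of "\<lambda>k. k + a"])
    show "bij (\<lambda>k. k + a)"
      by (rule bij_betwI[of _ _ _ "\<lambda>k. k - a"]) simp_all
  qed (simp add: comp_def)
  finally show ?thesis by (simp add: aug_Sum_any)
qed

lemma aug_mult: "aug (p * q) = aug p * aug q"
proof (induction p rule: update_induct)
  case const
  then show ?case by simp
next
  case (update f a b)
  have "Poly_Mapping.update a b f = f + Poly_Mapping.single a b"
    by (rule poly_mapping_eqI) (use update in \<open>auto simp: Poly_Mapping.lookup_update Poly_Mapping.lookup_add Poly_Mapping.lookup_single in_keys_iff when_def\<close>)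
  then show ?case using update by (simp add: distrib_right aug_add aug_single_mult)
qed

lemma aug_sum: "aug (sum g A) = sum (\<lambda>x. aug (g x)) A"
  by (induction A rule: infinite_finite_induct) (simp_all add: aug_add)

definition augf :: "LR fps \<Rightarrow> int fps" where
  "augf f = Abs_fps (\<lambda>n. aug (fps_nth f n))"

lemma augf_nth[simp]: "fps_nth (augf f) n = aug (fps_nth f n)"
  by (simp add: augf_def)

lemma augf_add: "augf (f + g) = augf f + augf g"
  by (simp add: fps_ext aug_add)

lemma augf_zero[simp]: "augf 0 = 0"
  by (simp add: fps_ext)

lemma augf_sum: "augf (sum g A) = sum (\<lambda>x. augf (g x)) A"
  by (induction A rule: infinite_finite_induct) (simp_all add: augf_add)

lemma augf_mult: "augf (f * g) = augf f * augf g"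
  by (simp add: fps_ext fps_mult_nth aug_sum aug_mult)

lemma augf_const[simp]: "augf (fps_const c) = fps_const (aug c)"
  by (simp add: fps_ext)

lemma augf_one[simp]: "augf 1 = 1"
  by (metis augf_const aug_one fps_const_1_eq_1)

lemma augf_uminus: "augf (- f) = - augf f"
  by (simp add: fps_ext aug_uminus)

lemma augf_diff: "augf (f - g) = augf f - augf g"
  by (simp add: fps_ext aug_diff)

lemma augf_X[simp]: "augf fps_X = fps_X"
  by (simp add: fps_ext fps_X_def)

definition mapm :: "LR fps ^ 2 ^ 2 \<Rightarrow> int fps ^ 2 ^ 2" where
  "mapm A = (\<chi> i j. augf (A $ i $ j))"

lemma mapm_mult: "mapm (A ** B) = mapm A ** mapm B"
  by (simp add: mapm_def matrix_matrix_mult_def vec_eq_iff augf_sum augf_mult)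

lemma mapm_one: "mapm (mat 1) = mat 1"
  by (simp add: mapm_def mat_def vec_eq_iff)

lemma mat2_mult: "mat2 a b c d ** mat2 e f g h = mat2 (a*e + b*g) (a*f + b*h) (c*e + d*g) (c*f + d*h)"
  by (simp add: vec_eq_iff forall_2 matrix_matrix_mult_def sum_2 mat2_def)

lemma mat_one_2: "(mat 1 :: 'a::{zero,one} ^2^2) = mat2 1 0 0 1"
  by (simp add: vec_eq_iff forall_2 mat_def mat2_def)

lemma mapm_mat2: "mapm (mat2 a b c d) = mat2 (augf a) (augf b) (augf c) (augf d)"
  by (simp add: vec_eq_iff forall_2 mapm_def mat2_def)

lemma group_GL2: "group GL2"
proof (rule groupI)
  fix x assume "x \<in> carrier GL2"
  then obtain y where "x ** y = mat 1" "y ** x = mat 1" by (auto simp: GL2_def invertible_def)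
  then show "\<exists>y\<in>carrier GL2. y \<otimes>\<^bsub>GL2\<^esub> x = \<one>\<^bsub>GL2\<^esub>"
    by (auto simp: GL2_def invertible_def intro!: bexI[of _ y])
qed (auto simp: GL2_def invertible_mult matrix_mul_assoc intro: invertible_def[THEN iffD2])

lemma LX_inv: "LX * Poly_Mapping.single (-1, 0) 1 = 1"
  by (simp add: LX_def mult_single single_one[symmetric] zero_prod_def)

lemma LY_inv: "LY * Poly_Mapping.single (0, -1) 1 = 1"
  by (simp add: LY_def mult_single single_one[symmetric] zero_prod_def)

lemma tt_inv: "tt * ttinv = 1"
proof (rule fps_ext)
  fix n
  show "fps_nth (tt * ttinv) n = fps_nth 1 n"
    by (cases n) (simp_all add: tt_def ttinv_def distrib_right)
qed

lemma inv_upper: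
  fixes x xi c :: "'a::comm_ring_1"
  assumes "x * xi = 1"
  shows "invertible (mat2 1 c 0 x)"
proof -
  have "mat2 1 c 0 x ** mat2 1 (-(c * xi)) 0 xi = mat 1"
       "mat2 1 (-(c * xi)) 0 xi ** mat2 1 c 0 x = mat 1"
    using assms by (simp_all add: mat2_mult mat_one_2 mult.assoc mult.commute[of xi])
  then show ?thesis unfolding invertible_def by blast
qed

lemma inv_lower:
  fixes a ai b :: "'a::comm_ring_1"
  assumes "a * ai = 1"
  shows "invertible (mat2 a 0 b 1)"
proof -
  have "mat2 a 0 b 1 ** mat2 ai 0 (-(b * ai)) 1 = mat 1"
       "mat2 ai 0 (-(b * ai)) 1 ** mat2 a 0 b 1 = mat 1"
    using assms by (simp_all add: mat2_mult mat_one_2 mult.assoc mult.commute[of ai])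
  then show ?thesis unfolding invertible_def by blast
qed

lemma M1_inv: "invertible M1"
  unfolding M1_def
  by (rule inv_upper[where xi="fps_const (Poly_Mapping.single (-1, 0) 1 :: LR)"]) (simp add: LX_inv[symmetric])

lemma M2T_inv: "invertible M2T"
proof -
  have "(fps_const LY * tt) * (fps_const (Poly_Mapping.single (0, -1) 1 :: LR) * ttinv) =
    fps_const (LY * Poly_Mapping.single (0, -1) 1) * (tt * ttinv)"
    by (simp add: ac_simps)
  then have "(fps_const LY * tt) * (fps_const (Poly_Mapping.single (0, -1) 1 :: LR) * ttinv) = 1"
    by (simp only: LY_inv tt_inv fps_const_1_eq_1 mult_1_left)
  then show ?thesis unfolding M2T_def by (rule inv_lower)
qed

lemma mapm_M1: "mapm M1 = mat 1"
proof -
  have "aug LY = 1" "aug LX = 1" by (simp_all add: LY_def LX_def)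
  then show ?thesis
    by (simp add: M1_def mapm_mat2 mat_one_2 aug_diff)
qed

definition NN :: "int fps ^ 2 ^ 2" where "NN = mapm M2T"

definition DD :: "(int fps ^ 2 ^ 2) set" where
  "DD = {B. \<forall>C. C ** NN = NN ** C \<longrightarrow> C ** B = B ** C}"

lemma DD_one: "mat 1 \<in> DD" by (simp add: DD_def)
lemma DD_N: "NN \<in> DD" by (simp add: DD_def)

lemma DD_mult: "B1 \<in> DD \<Longrightarrow> B2 \<in> DD \<Longrightarrow> B1 ** B2 \<in> DD"
  unfolding DD_def
proof (intro CollectI allI impI)
  fix C assume c: "C ** NN = NN ** C" and "B1 \<in> {B. \<forall>C. C ** NN = NN ** C \<longrightarrow> C ** B = B ** C}"
    and "B2 \<in> {B. \<forall>C. C ** NN = NN ** C \<longrightarrow> C ** B = B ** C}"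
  then have c1: "C ** B1 = B1 ** C" and c2: "C ** B2 = B2 ** C" by auto
  have "C ** (B1 ** B2) = B1 ** (C ** B2)" by (simp only: matrix_mul_assoc c1)
  also have "\<dots> = (B1 ** B2) ** C" by (simp only: matrix_mul_assoc c2)
  finally show "C ** (B1 ** B2) = (B1 ** B2) ** C" .
qed

lemma DD_inv: assumes "B \<in> DD" "B ** B' = mat 1" "B' ** B = mat 1" shows "B' \<in> DD"
  unfolding DD_def
proof (intro CollectI allI impI)
  fix C assume c: "C ** NN = NN ** C"
  then have cb: "C ** B = B ** C" using assms(1) by (simp add: DD_def)
  have "C ** B' = B' ** B ** C ** B'" by (simp add: assms(3))
  also have "\<dots> = B' ** C ** B ** B'" by (simp add: cb matrix_mul_assoc[symmetric])
  also have "\<dots> = B' ** C" by (simp add: assms(2) matrix_mul_assoc[symmetric])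
  finally show "C ** B' = B' ** C" .
qed

lemma DD_comm: "B1 \<in> DD \<Longrightarrow> B2 \<in> DD \<Longrightarrow> B1 ** B2 = B2 ** B1"
proof -
  assume a1: "B1 \<in> DD" and a2: "B2 \<in> DD"
  have "NN ** B2 = B2 ** NN" using a2 unfolding DD_def by auto
  then have "B2 ** NN = NN ** B2" by simp
  then show "B1 ** B2 = B2 ** B1" using a1 unfolding DD_def by auto
qed

lemma GL2_simps[simp]: "carrier GL2 = {A. invertible A}" "x \<otimes>\<^bsub>GL2\<^esub> y = x ** y" "\<one>\<^bsub>GL2\<^esub> = mat 1"
  by (simp_all add: GL2_def)

lemma gens_carrier: "{M1, M2T} \<subseteq> carrier GL2"
  using M1_inv M2T_inv by simp

lemma Fgrp_carrier: "Fgrp \<subseteq> carrier GL2"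
  unfolding Fgrp_def using group.generate_in_carrier[OF group_GL2 gens_carrier] by blast

lemma inv_mapm:
  assumes "h \<in> carrier GL2"
  shows "mapm h ** mapm (inv\<^bsub>GL2\<^esub> h) = mat 1" "mapm (inv\<^bsub>GL2\<^esub> h) ** mapm h = mat 1"
proof -
  have "h \<otimes>\<^bsub>GL2\<^esub> inv\<^bsub>GL2\<^esub> h = \<one>\<^bsub>GL2\<^esub>" "inv\<^bsub>GL2\<^esub> h \<otimes>\<^bsub>GL2\<^esub> h = \<one>\<^bsub>GL2\<^esub>"
    using group.r_inv[OF group_GL2 assms] group.l_inv[OF group_GL2 assms] by auto
  then show "mapm h ** mapm (inv\<^bsub>GL2\<^esub> h) = mat 1" "mapm (inv\<^bsub>GL2\<^esub> h) ** mapm h = mat 1"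
    by (simp_all add: mapm_mult[symmetric] mapm_one)
qed

lemma Fgrp_DD: "g \<in> Fgrp \<Longrightarrow> mapm g \<in> DD"
  unfolding Fgrp_def
proof (induction rule: generate.induct)
  case one
  then show ?case by (simp add: mapm_one DD_one)
next
  case (incl h)
  then show ?case using DD_N mapm_M1 DD_one by (auto simp: NN_def)
next
  case (inv h)
  have hc: "h \<in> carrier GL2" using inv gens_carrier by blast
  have "mapm h \<in> DD" using inv DD_N mapm_M1 DD_one by (auto simp: NN_def)
  then show ?case using DD_inv inv_mapm[OF hc] by blast
next
  case (eng h1 h2)
  then show ?case by (simp add: mapm_mult DD_mult)
qed

lemma derived_set_one:
  assumes "s \<in> derived_set GL2 Fgrp"
  shows "mapm s = mat 1 \<and> s \<in> carrier GL2"
proof -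
  obtain h1 h2 where h: "h1 \<in> Fgrp" "h2 \<in> Fgrp"
    and s: "s = h1 \<otimes>\<^bsub>GL2\<^esub> h2 \<otimes>\<^bsub>GL2\<^esub> inv\<^bsub>GL2\<^esub> h1 \<otimes>\<^bsub>GL2\<^esub> inv\<^bsub>GL2\<^esub> h2"
    using assms by blast
  have c1: "h1 \<in> carrier GL2" and c2: "h2 \<in> carrier GL2" using h Fgrp_carrier by auto
  have i1: "inv\<^bsub>GL2\<^esub> h1 \<in> carrier GL2" by (rule group.inv_closed[OF group_GL2 c1])
  have i2: "inv\<^bsub>GL2\<^esub> h2 \<in> carrier GL2" by (rule group.inv_closed[OF group_GL2 c2])
  have sc: "s \<in> carrier GL2" unfolding s
    using c1 c2 i1 i2 by (simp add: invertible_mult)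
  have comm: "mapm h1 ** mapm h2 = mapm h2 ** mapm h1" using Fgrp_DD h DD_comm by blast
  have "mapm s = mapm h1 ** mapm h2 ** mapm (inv\<^bsub>GL2\<^esub> h1) ** mapm (inv\<^bsub>GL2\<^esub> h2)"
    by (simp add: s mapm_mult)
  also have "\<dots> = mapm h2 ** (mapm h1 ** mapm (inv\<^bsub>GL2\<^esub> h1)) ** mapm (inv\<^bsub>GL2\<^esub> h2)"
    by (simp add: comm matrix_mul_assoc)
  also have "\<dots> = mat 1" by (simp add: inv_mapm[OF c1] inv_mapm[OF c2])
  finally show ?thesis using sc by simp
qed

lemma derived_one: "f \<in> derived GL2 Fgrp \<Longrightarrow> mapm f = mat 1"
  unfolding derived_def
proof (induction rule: generate.induct)
  case one
  then show ?case by (simp add: mapm_one)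
next
  case (incl h)
  then show ?case using derived_set_one by blast
next
  case (inv h)
  then have "mapm h = mat 1" "h \<in> carrier GL2" using derived_set_one by blast+
  then show ?case using inv_mapm(1)[of h] by simp
next
  case (eng h1 h2)
  then show ?case by (simp add: mapm_mult)
qed

theorem lemma5:
  fixes f :: "LR fps ^ 2 ^ 2"
  assumes "f \<in> derived GL2 Fgrp"
  shows "\<forall>i\<ge>1. \<forall>j k. coeff_mat f i $ j $ k \<in> Sigma_ideal"
proof (intro allI impI)
  fix i :: nat and j k :: 2 assume i: "i \<ge> 1"
  have "mapm f $ j $ k = mat 1 $ j $ k" using derived_one[OF assms] by simp
  then have "augf (f $ j $ k) = (if j = k then 1 else 0)" by (simp add: mapm_def mat_def)
  then have "fps_nth (augf (f $ j $ k)) i = 0" using i by auto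
  then show "coeff_mat f i $ j $ k \<in> Sigma_ideal"
    by (simp add: coeff_mat_def Sigma_ideal_def)
qed

end
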